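(* Let $R$ be a commutative Noetherian ring of finite Krull dimension $d$ such that $R/\mathfrak{m}$ is infinite for every maximal ideal $\mathfrak{m}$ of $R$. Let $R[x_1,\ldots,x_n]$ be a polynomial ring over $R$ and $J \subseteq R[x_1,\ldots,x_n]$ an ideal with $\mathrm{height}(J) \geq d+1$. Then for every integer $0 \leq \ell \leq n$ there exist $r_1,\ldots,r_\ell \in R$ such that either $J + (x_1 - r_1, \ldots, x_\ell - r_\ell) = R[x_1,\ldots,x_n]$, or $\mathrm{height}(J + (x_1 - r_1,\ldots,x_\ell - r_\ell)) \geq d + \ell + 1$ (for $\ell = 0$ the ideal is understood to be $J$). *)

theory Defs
  imports Main "HOL-Library.Poly_Mapping" "HOL-Library.Extended_Nat"
begin

definition ideal_of :: "'b::comm_ring_1 set \<Rightarrow> 'b set \<Rightarrow> bool" where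
  "ideal_of S I \<longleftrightarrow> I \<subseteq> S \<and> 0 \<in> I \<and> (\<forall>a\<in>I. \<forall>b\<in>I. a + b \<in> I) \<and> (\<forall>a\<in>I. - a \<in> I)
     \<and> (\<forall>s\<in>S. \<forall>a\<in>I. s * a \<in> I)"

definition prime_ideal_of :: "'b::comm_ring_1 set \<Rightarrow> 'b set \<Rightarrow> bool" where
  "prime_ideal_of S P \<longleftrightarrow> ideal_of S P \<and> P \<noteq> S \<and> (\<forall>a\<in>S. \<forall>b\<in>S. a * b \<in> P \<longrightarrow> a \<in> P \<or> b \<in> P)"

definition maximal_ideal_of :: "'b::comm_ring_1 set \<Rightarrow> 'b set \<Rightarrow> bool" where
  "maximal_ideal_of S M \<longleftrightarrow> ideal_of S M \<and> M \<noteq> S \<and> (\<forall>I. ideal_of S I \<and> M \<subseteq> I \<longrightarrow> I = M \<or> I = S)"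

definition ideal_gen :: "'b::comm_ring_1 set \<Rightarrow> 'b set \<Rightarrow> 'b set" where
  "ideal_gen S X = \<Inter>{I. ideal_of S I \<and> X \<subseteq> I}"

definition noetherian_on :: "'b::comm_ring_1 set \<Rightarrow> bool" where
  "noetherian_on S \<longleftrightarrow> (\<forall>I. ideal_of S I \<longrightarrow> (\<exists>F. finite F \<and> F \<subseteq> I \<and> I = ideal_gen S F))"

definition prime_chain :: "'b::comm_ring_1 set \<Rightarrow> nat \<Rightarrow> (nat \<Rightarrow> 'b set) \<Rightarrow> bool" where
  "prime_chain S k f \<longleftrightarrow> (\<forall>i\<le>k. prime_ideal_of S (f i)) \<and> (\<forall>i<k. f i \<subset> f (Suc i))"

definition krull_dim :: "'b::comm_ring_1 set \<Rightarrow> enat" where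
  "krull_dim S = Sup {enat k | k. \<exists>f. prime_chain S k f}"

definition height_prime :: "'b::comm_ring_1 set \<Rightarrow> 'b set \<Rightarrow> enat" where
  "height_prime S P = Sup {enat k | k. \<exists>f. prime_chain S k f \<and> f k = P}"

text \<open>Height of an ideal: infimum of heights of primes containing it (= \<infinity> for the unit ideal).\<close>
definition ideal_height :: "'b::comm_ring_1 set \<Rightarrow> 'b set \<Rightarrow> enat" where
  "ideal_height S I = Inf {height_prime S P | P. prime_ideal_of S P \<and> I \<subseteq> P}"

text \<open>Polynomial ring R[x_1,...,x_n] inside the ring of finitely supported polynomials
  (monomials are finitely supported exponent vectors).\<close>
definition mpoly_ring :: "nat \<Rightarrow> ((nat \<Rightarrow>\<^sub>0 nat) \<Rightarrow>\<^sub>0 'a::comm_ring_1) set" where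
  "mpoly_ring n = {p. \<forall>m\<in>Poly_Mapping.keys p. Poly_Mapping.keys m \<subseteq> {1..n}}"

definition mvar :: "nat \<Rightarrow> (nat \<Rightarrow>\<^sub>0 nat) \<Rightarrow>\<^sub>0 'a::comm_ring_1" where
  "mvar i = Poly_Mapping.single (Poly_Mapping.single i 1) 1"

definition mconst :: "'a::comm_ring_1 \<Rightarrow> (nat \<Rightarrow>\<^sub>0 nat) \<Rightarrow>\<^sub>0 'a" where
  "mconst c = Poly_Mapping.single 0 c"

definition residue_cosets :: "'a::comm_ring_1 set \<Rightarrow> 'a set set" where
  "residue_cosets M = (\<lambda>a. {b. a - b \<in> M}) ` UNIV"

end

theory Submission
  imports Defs
begin


definition subring_of :: "'b::comm_ring_1 set \<Rightarrow> bool" where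
  "subring_of S \<longleftrightarrow> 0 \<in> S \<and> 1 \<in> S \<and> (\<forall>a\<in>S. \<forall>b\<in>S. a + b \<in> S \<and> a * b \<in> S \<and> -a \<in> S)"

lemma subringD:
  assumes "subring_of S"
  shows "0 \<in> S" "1 \<in> S" "a \<in> S \<Longrightarrow> b \<in> S \<Longrightarrow> a + b \<in> S"
    "a \<in> S \<Longrightarrow> b \<in> S \<Longrightarrow> a * b \<in> S" "a \<in> S \<Longrightarrow> -a \<in> S"
    "a \<in> S \<Longrightarrow> b \<in> S \<Longrightarrow> a - b \<in> S"
proof -
  show "0 \<in> S" "1 \<in> S" using assms unfolding subring_of_def by blast+
  show "a \<in> S \<Longrightarrow> b \<in> S \<Longrightarrow> a + b \<in> S" "a \<in> S \<Longrightarrow> b \<in> S \<Longrightarrow> a * b \<in> S" "a \<in> S \<Longrightarrow> -a \<in> S"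
    using assms unfolding subring_of_def by blast+
  show "a \<in> S \<Longrightarrow> b \<in> S \<Longrightarrow> a - b \<in> S"
    using assms unfolding subring_of_def diff_conv_add_uminus by blast
qed

lemma subring_pow: "subring_of S \<Longrightarrow> a \<in> S \<Longrightarrow> a ^ k \<in> S"
  by (induction k) (auto intro: subringD)

lemma subring_sum: "subring_of S \<Longrightarrow> (\<And>x. x \<in> A \<Longrightarrow> f x \<in> S) \<Longrightarrow> sum f A \<in> S"
  by (induction A rule: infinite_finite_induct) (auto intro: subringD)

lemma subring_UNIV: "subring_of UNIV"
  by (simp add: subring_of_def)

lemma idealD:
  assumes "ideal_of S I"
  shows "I \<subseteq> S" "0 \<in> I" "a \<in> I \<Longrightarrow> b \<in> I \<Longrightarrow> a + b \<in> I" "a \<in> I \<Longrightarrow> -a \<in> I"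
    "s \<in> S \<Longrightarrow> a \<in> I \<Longrightarrow> s * a \<in> I"
    "s \<in> S \<Longrightarrow> a \<in> I \<Longrightarrow> a * s \<in> I"
    "a \<in> I \<Longrightarrow> b \<in> I \<Longrightarrow> a - b \<in> I"
proof -
  show "I \<subseteq> S" "0 \<in> I" using assms unfolding ideal_of_def by blast+
  show "a \<in> I \<Longrightarrow> b \<in> I \<Longrightarrow> a + b \<in> I" "a \<in> I \<Longrightarrow> -a \<in> I" "s \<in> S \<Longrightarrow> a \<in> I \<Longrightarrow> s * a \<in> I"
    using assms unfolding ideal_of_def by blast+
  show "s \<in> S \<Longrightarrow> a \<in> I \<Longrightarrow> a * s \<in> I"
    using assms unfolding ideal_of_def by (metis mult.commute)
  show "a \<in> I \<Longrightarrow> b \<in> I \<Longrightarrow> a - b \<in> I"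
    using assms unfolding ideal_of_def diff_conv_add_uminus by blast
qed

lemma ideal_sum: "ideal_of S I \<Longrightarrow> (\<And>x. x \<in> A \<Longrightarrow> f x \<in> I) \<Longrightarrow> sum f A \<in> I"
  by (induction A rule: infinite_finite_induct) (auto intro: idealD)

lemma ideal_one_iff: "subring_of S \<Longrightarrow> ideal_of S I \<Longrightarrow> 1 \<in> I \<Longrightarrow> I = S"
proof -
  assume S: "subring_of S" and I: "ideal_of S I" and "1 \<in> I"
  have "s \<in> I" if "s \<in> S" for s using idealD(5)[OF I that \<open>1 \<in> I\<close>] by simp
  then show "I = S" using idealD(1)[OF I] by blast
qed

lemma idealI:
  assumes "I \<subseteq> S" "0 \<in> I" "\<And>a b. a \<in> I \<Longrightarrow> b \<in> I \<Longrightarrow> a + b \<in> I" "\<And>a. a \<in> I \<Longrightarrow> -a \<in> I"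
    "\<And>s a. s \<in> S \<Longrightarrow> a \<in> I \<Longrightarrow> s * a \<in> I"
  shows "ideal_of S I"
  using assms unfolding ideal_of_def by blast

lemma ideal_gen_ideal:
  assumes S: "subring_of S" and X: "X \<subseteq> S"
  shows "ideal_of S (ideal_gen S X)"
proof -
  have SS: "ideal_of S S" using S by (intro idealI) (auto intro: subringD)
  let ?F = "{I. ideal_of S I \<and> X \<subseteq> I}"
  have "S \<in> ?F" using SS X by auto
  show ?thesis unfolding ideal_gen_def
  proof (rule idealI)
    show "\<Inter>?F \<subseteq> S" using \<open>S \<in> ?F\<close> by blast
    show "0 \<in> \<Inter>?F" by (auto dest: idealD(2))
    show "a + b \<in> \<Inter>?F" if "a \<in> \<Inter>?F" "b \<in> \<Inter>?F" for a b using that by (auto dest: idealD(3))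
    show "- a \<in> \<Inter>?F" if "a \<in> \<Inter>?F" for a using that by (auto dest: idealD(4))
    show "s * a \<in> \<Inter>?F" if "s \<in> S" "a \<in> \<Inter>?F" for s a using that by (auto dest: idealD(5))
  qed
qed

lemma ideal_gen_sup: "X \<subseteq> ideal_gen S X"
  unfolding ideal_gen_def by auto

lemma ideal_gen_least: "ideal_of S I \<Longrightarrow> X \<subseteq> I \<Longrightarrow> ideal_gen S X \<subseteq> I"
  unfolding ideal_gen_def by auto

lemma ideal_gen_finite:
  assumes S: "subring_of S" and F: "finite F" "F \<subseteq> S" and x: "x \<in> ideal_gen S F"
  shows "\<exists>c. (\<forall>f. c f \<in> S) \<and> x = (\<Sum>f\<in>F. c f * f)"
proof -
  define L where "L = {y. \<exists>c. (\<forall>f. c f \<in> S) \<and> y = (\<Sum>f\<in>F. c f * f)}"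
  have "ideal_of S L"
  proof (rule idealI)
    show "L \<subseteq> S" using S F by (auto simp: L_def intro!: subring_sum subringD(4))
    show "0 \<in> L" unfolding L_def using S by (intro CollectI exI[of _ "\<lambda>_. 0"]) (auto intro: subringD)
  next
    fix a b assume "a \<in> L" "b \<in> L"
    then obtain ca cb where "\<forall>f. ca f \<in> S" "a = (\<Sum>f\<in>F. ca f * f)" "\<forall>f. cb f \<in> S" "b = (\<Sum>f\<in>F. cb f * f)"
      unfolding L_def by auto
    then show "a + b \<in> L" unfolding L_def using S
      by (intro CollectI exI[of _ "\<lambda>f. ca f + cb f"]) (auto simp: sum.distrib distrib_right intro: subringD)
  next
    fix a assume "a \<in> L"
    then obtain ca where "\<forall>f. ca f \<in> S" "a = (\<Sum>f\<in>F. ca f * f)" unfolding L_def by auto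
    then show "-a \<in> L" unfolding L_def using S
      by (intro CollectI exI[of _ "\<lambda>f. - ca f"]) (auto simp: sum_negf intro: subringD)
  next
    fix s a assume "s \<in> S" "a \<in> L"
    then obtain ca where "\<forall>f. ca f \<in> S" "a = (\<Sum>f\<in>F. ca f * f)" unfolding L_def by auto
    then show "s * a \<in> L" unfolding L_def using S \<open>s \<in> S\<close>
      by (intro CollectI exI[of _ "\<lambda>f. s * ca f"]) (auto simp: sum_distrib_left mult.assoc intro: subringD)
  qed
  moreover have "F \<subseteq> L"
  proof
    fix g assume g: "g \<in> F"
    show "g \<in> L" unfolding L_def
    proof (intro CollectI exI[of _ "\<lambda>f. if f = g then 1 else 0"] conjI)
      show "\<forall>f. (if f = g then 1 else 0) \<in> S" using S by (auto intro: subringD)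
      have "(\<Sum>f\<in>F. (if f = g then 1 else 0) * f) = (\<Sum>f\<in>F. if f = g then f else 0)"
        by (rule sum.cong) auto
      then show "g = (\<Sum>f\<in>F. (if f = g then 1 else 0) * f)" using g F by (simp add: sum.delta)
    qed
  qed
  ultimately have "ideal_gen S F \<subseteq> L" by (rule ideal_gen_least)
  with x show ?thesis unfolding L_def by auto
qed

lemma ideal_gen_insert:
  assumes S: "subring_of S" and I: "ideal_of S I" and a: "a \<in> S"
  shows "ideal_gen S (I \<union> {a}) = {m + s * a | m s. m \<in> I \<and> s \<in> S}"
proof
  define L where "L = {m + s * a | m s. m \<in> I \<and> s \<in> S}"
  have IS: "x \<in> I \<Longrightarrow> x \<in> S" for x using idealD(1)[OF I] by blast
  have LI: "x \<in> L" if "m \<in> I" "s \<in> S" "x = m + s * a" for x m s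
    unfolding L_def using that by auto
  have "ideal_of S L"
  proof (rule idealI)
    show "L \<subseteq> S"
    proof
      fix x assume "x \<in> L"
      then obtain m s where h: "m \<in> I" "s \<in> S" "x = m + s * a" unfolding L_def by auto
      then show "x \<in> S" using subringD(3)[OF S IS[OF h(1)] subringD(4)[OF S h(2) a]] h(3) by simp
    qed
    have "0 = 0 + 0 * a" by simp
    then show "0 \<in> L" by (rule LI[OF idealD(2)[OF I] subringD(1)[OF S]])
  next
    fix x y assume "x \<in> L" "y \<in> L"
    then obtain m s m' s' where h: "m \<in> I" "s \<in> S" "x = m + s * a" "m' \<in> I" "s' \<in> S" "y = m' + s' * a"
      unfolding L_def by auto
    have "x + y = (m + m') + (s + s') * a" using h by (simp add: algebra_simps)
    then show "x + y \<in> L" by (rule LI[OF idealD(3)[OF I h(1,4)] subringD(3)[OF S h(2,5)]])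
  next
    fix x assume "x \<in> L"
    then obtain m s where h: "m \<in> I" "s \<in> S" "x = m + s * a" unfolding L_def by auto
    have "-x = (-m) + (-s) * a" using h by (simp add: algebra_simps)
    then show "-x \<in> L" by (rule LI[OF idealD(4)[OF I h(1)] subringD(5)[OF S h(2)]])
  next
    fix t x assume t: "t \<in> S" "x \<in> L"
    then obtain m s where h: "m \<in> I" "s \<in> S" "x = m + s * a" unfolding L_def by auto
    have "t * x = (t * m) + (t * s) * a" using h by (simp add: algebra_simps)
    then show "t * x \<in> L" by (rule LI[OF idealD(5)[OF I t(1) h(1)] subringD(4)[OF S t(1) h(2)]])
  qed
  moreover have "I \<union> {a} \<subseteq> L"
  proof -
    have "m \<in> L" if "m \<in> I" for m
    proof -
      have "m = m + 0 * a" by simp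
      then show ?thesis by (rule LI[OF that subringD(1)[OF S]])
    qed
    moreover have "a \<in> L"
    proof -
      have "a = 0 + 1 * a" by simp
      then show ?thesis by (rule LI[OF idealD(2)[OF I] subringD(2)[OF S]])
    qed
    ultimately show ?thesis by auto
  qed
  ultimately show "ideal_gen S (I \<union> {a}) \<subseteq> L" by (rule ideal_gen_least)
next
  have "I \<union> {a} \<subseteq> S" using idealD(1)[OF I] a by auto
  then have J: "ideal_of S (ideal_gen S (I \<union> {a}))" by (rule ideal_gen_ideal[OF S])
  have sub: "I \<union> {a} \<subseteq> ideal_gen S (I \<union> {a})" by (rule ideal_gen_sup)
  show "{m + s * a | m s. m \<in> I \<and> s \<in> S} \<subseteq> ideal_gen S (I \<union> {a})"
  proof clarify
    fix m s assume "m \<in> I" "s \<in> S"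
    then show "m + s * a \<in> ideal_gen S (I \<union> {a})"
      using sub idealD(3)[OF J _ idealD(5)[OF J \<open>s \<in> S\<close>]] \<open>m \<in> I\<close> by auto
  qed
qed


lemma chain_union_ideal:
  assumes C: "C \<noteq> {}" "\<And>I. I \<in> C \<Longrightarrow> ideal_of S I" "\<And>I J. I \<in> C \<Longrightarrow> J \<in> C \<Longrightarrow> I \<subseteq> J \<or> J \<subseteq> I"
  shows "ideal_of S (\<Union>C)"
proof (rule idealI)
  show "\<Union>C \<subseteq> S" using C(2) idealD(1) by blast
  obtain I0 where "I0 \<in> C" using C(1) by auto
  then show "0 \<in> \<Union>C" using C(2) idealD(2) by blast
next
  fix a b assume "a \<in> \<Union>C" "b \<in> \<Union>C"
  then obtain I J where IJ: "I \<in> C" "J \<in> C" "a \<in> I" "b \<in> J" by auto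
  show "a + b \<in> \<Union>C"
  proof (cases "I \<subseteq> J")
    case True
    then have "a + b \<in> J" using idealD(3)[OF C(2)[OF IJ(2)]] IJ by auto
    then show ?thesis using IJ by auto
  next
    case False
    then have "J \<subseteq> I" using C(3)[OF IJ(1,2)] by auto
    then have "a + b \<in> I" using idealD(3)[OF C(2)[OF IJ(1)]] IJ by auto
    then show ?thesis using IJ by auto
  qed
next
  fix a assume "a \<in> \<Union>C"
  then obtain I where "I \<in> C" "a \<in> I" by auto
  then show "-a \<in> \<Union>C" using idealD(4)[OF C(2)] by blast
next
  fix s a assume "s \<in> S" "a \<in> \<Union>C"
  then obtain I where "I \<in> C" "a \<in> I" by auto
  then have "s * a \<in> I" using idealD(5)[OF C(2)[OF \<open>I \<in> C\<close>] \<open>s \<in> S\<close>] by auto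
  then show "s * a \<in> \<Union>C" using \<open>I \<in> C\<close> by auto
qed

definition phi :: "'b::comm_ring_1 set \<Rightarrow> 'b set \<Rightarrow> bool" where
  "phi S I \<longleftrightarrow> (\<exists>Ps. (\<forall>P\<in>set Ps. prime_ideal_of S P \<and> I \<subseteq> P) \<and>
      (\<forall>xs. length xs = length Ps \<and> (\<forall>i<length Ps. xs ! i \<in> Ps ! i) \<longrightarrow> prod_list xs \<in> I))"

lemma phi_whole: "subring_of S \<Longrightarrow> phi S S"
  unfolding phi_def by (intro exI[of _ "[]"]) (auto intro: subringD)

lemma phi_prime: "prime_ideal_of S P \<Longrightarrow> phi S P"
  unfolding phi_def
proof (intro exI[of _ "[P]"] conjI allI impI)
  show "\<forall>Q\<in>set [P]. prime_ideal_of S Q \<and> P \<subseteq> Q" if "prime_ideal_of S P" using that by auto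
  fix xs :: "'a list" assume h: "length xs = length [P] \<and> (\<forall>i<length [P]. xs ! i \<in> [P] ! i)"
  then obtain x where "xs = [x]" by (cases xs) auto
  with h show "prod_list xs \<in> P" by auto
qed

lemma prime_ideal_subset: "prime_ideal_of S P \<Longrightarrow> P \<subseteq> S"
  unfolding prime_ideal_of_def using idealD(1) by blast

lemma prime_ideal_ideal: "prime_ideal_of S P \<Longrightarrow> ideal_of S P"
  unfolding prime_ideal_of_def by blast

lemma prime_ideal_mult: "prime_ideal_of S P \<Longrightarrow> a \<in> S \<Longrightarrow> b \<in> S \<Longrightarrow> a * b \<in> P \<Longrightarrow> a \<in> P \<or> b \<in> P"
  unfolding prime_ideal_of_def by blast

lemma prime_ideal_ne: "prime_ideal_of S P \<Longrightarrow> P \<noteq> S"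
  unfolding prime_ideal_of_def by blast

lemma prime_one_notin: "subring_of S \<Longrightarrow> prime_ideal_of S P \<Longrightarrow> 1 \<notin> P"
  using ideal_one_iff prime_ideal_ideal prime_ideal_ne by blast

lemma prime_prod_list:
  assumes S: "subring_of S" and P: "prime_ideal_of S P"
  shows "(\<forall>x\<in>set xs. x \<in> S \<and> x \<notin> P) \<Longrightarrow> prod_list xs \<notin> P"
proof (induction xs)
  case Nil
  then show ?case using prime_one_notin[OF S P] by simp
next
  case (Cons x xs)
  have "prod_list xs \<in> S" using Cons.prems
  proof (induction xs)
    case Nil then show ?case using subringD(2)[OF S] by simp
  next
    case (Cons y ys) then show ?case using subringD(4)[OF S] by simp
  qed
  moreover have "x \<in> S" "x \<notin> P" using Cons.prems by auto
  ultimately show ?case using Cons prime_ideal_mult[OF P, of x "prod_list xs"] by auto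
qed

lemma phi_contains:
  assumes S: "subring_of S" and ph: "phi S I" 
  shows "\<exists>\<P>. finite \<P> \<and> (\<forall>P\<in>\<P>. prime_ideal_of S P \<and> I \<subseteq> P) \<and>
            (\<forall>Q. prime_ideal_of S Q \<and> I \<subseteq> Q \<longrightarrow> (\<exists>P\<in>\<P>. P \<subseteq> Q))"
proof -
  obtain Ps where P1: "\<forall>P\<in>set Ps. prime_ideal_of S P \<and> I \<subseteq> P"
    and P2: "\<And>xs. length xs = length Ps \<Longrightarrow> (\<forall>i<length Ps. xs ! i \<in> Ps ! i) \<Longrightarrow> prod_list xs \<in> I"
    using ph unfolding phi_def by blast
  have "\<exists>P\<in>set Ps. P \<subseteq> Q" if Q: "prime_ideal_of S Q" "I \<subseteq> Q" for Q
  proof (rule ccontr)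
    assume "\<not> (\<exists>P\<in>set Ps. P \<subseteq> Q)"
    then have ex: "\<exists>x. x \<in> P \<and> x \<notin> Q" if "P \<in> set Ps" for P using that by auto
    define xs where "xs = map (\<lambda>P. SOME x. x \<in> P \<and> x \<notin> Q) Ps"
    have xs: "xs ! i \<in> Ps ! i \<and> xs ! i \<notin> Q" if "i < length Ps" for i
      using someI_ex[OF ex[of "Ps ! i"]] that unfolding xs_def by auto
    have "prod_list xs \<in> I" using xs by (intro P2) (auto simp: xs_def)
    then have "prod_list xs \<in> Q" using Q by auto
    moreover have "\<forall>x\<in>set xs. x \<in> S \<and> x \<notin> Q"
    proof
      fix x assume "x \<in> set xs"
      then obtain i where i: "i < length xs" "x = xs ! i" by (auto simp: in_set_conv_nth)
      then have "i < length Ps" by (simp add: xs_def)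
      then have "x \<in> Ps ! i" "x \<notin> Q" using xs i by auto
      moreover have "Ps ! i \<subseteq> S" using P1 \<open>i < length Ps\<close> prime_ideal_subset nth_mem by blast
      ultimately show "x \<in> S \<and> x \<notin> Q" by auto
    qed
    ultimately show False using prime_prod_list[OF S Q(1)] by blast
  qed
  then show ?thesis using P1 by (intro exI[of _ "set Ps"]) auto
qed

lemma noeth_phi:
  assumes S: "subring_of S" and N: "noetherian_on S" and I: "ideal_of S I"
  shows "phi S I"
proof (rule ccontr)
  assume nI: "\<not> phi S I"
  define A where "A = {J. ideal_of S J \<and> \<not> phi S J}"
  have "I \<in> A" using I nI by (simp add: A_def)
  have "\<forall>C\<in>chains A. \<exists>U\<in>A. \<forall>X\<in>C. X \<subseteq> U"
  proof
    fix C assume C: "C \<in> chains A"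
    show "\<exists>U\<in>A. \<forall>X\<in>C. X \<subseteq> U"
    proof (cases "C = {}")
      case True then show ?thesis using \<open>I \<in> A\<close> by auto
    next
      case False
      have CA: "C \<subseteq> A" using chainsD2[OF C] .
      have id: "ideal_of S (\<Union>C)"
        by (rule chain_union_ideal[OF False]) (use CA chainsD[OF C] in \<open>auto simp: A_def\<close>)
      then obtain F where F: "finite F" "F \<subseteq> \<Union>C" "\<Union>C = ideal_gen S F"
        using N[unfolded noetherian_on_def, rule_format, OF id] by (elim exE conjE) blast
      have "subset.chain A C" using C by (simp add: chains_alt_def)
      then obtain B where B: "B \<in> C" "F \<subseteq> B"
        using finite_subset_Union_chain[OF F(1) F(2) False] by blast
      have "ideal_of S B" using B CA by (auto simp: A_def)
      then have "\<Union>C \<subseteq> B" using F(3) ideal_gen_least[OF _ B(2)] by simp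
      then show ?thesis using B CA by blast
    qed
  qed
  from Zorn_Lemma2[OF this] obtain M where M: "M \<in> A" and Mmax: "\<And>X. X \<in> A \<Longrightarrow> M \<subseteq> X \<Longrightarrow> X = M"
    by blast
  have Mi: "ideal_of S M" and Mp: "\<not> phi S M" using M by (auto simp: A_def)
  have "M \<noteq> S" using Mp phi_whole[OF S] by auto
  moreover have "\<not> prime_ideal_of S M" using Mp phi_prime by auto
  ultimately obtain a b where ab: "a \<in> S" "b \<in> S" "a * b \<in> M" "a \<notin> M" "b \<notin> M"
    using Mi unfolding prime_ideal_of_def by blast
  have big: "phi S (ideal_gen S (M \<union> {c}))" if c: "c \<in> S" "c \<notin> M" for c
  proof -
    have sub: "M \<union> {c} \<subseteq> S" using idealD(1)[OF Mi] c by auto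
    have id: "ideal_of S (ideal_gen S (M \<union> {c}))" by (rule ideal_gen_ideal[OF S sub])
    have "M \<union> {c} \<subseteq> ideal_gen S (M \<union> {c})" by (rule ideal_gen_sup)
    then have ne: "ideal_gen S (M \<union> {c}) \<noteq> M" and "M \<subseteq> ideal_gen S (M \<union> {c})" using c by auto
    then have "ideal_gen S (M \<union> {c}) \<notin> A" using Mmax by auto
    then show ?thesis using id by (auto simp: A_def)
  qed
  obtain Pa where Pa1: "\<forall>P\<in>set Pa. prime_ideal_of S P \<and> ideal_gen S (M \<union> {a}) \<subseteq> P"
    and Pa2: "\<And>xs. length xs = length Pa \<Longrightarrow> (\<forall>i<length Pa. xs ! i \<in> Pa ! i) \<Longrightarrow> prod_list xs \<in> ideal_gen S (M \<union> {a})"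
    using big[OF ab(1,4)] unfolding phi_def by blast
  obtain Pb where Pb1: "\<forall>P\<in>set Pb. prime_ideal_of S P \<and> ideal_gen S (M \<union> {b}) \<subseteq> P"
    and Pb2: "\<And>xs. length xs = length Pb \<Longrightarrow> (\<forall>i<length Pb. xs ! i \<in> Pb ! i) \<Longrightarrow> prod_list xs \<in> ideal_gen S (M \<union> {b})"
    using big[OF ab(2,5)] unfolding phi_def by blast
  have Ma: "M \<subseteq> ideal_gen S (M \<union> {a})" "M \<subseteq> ideal_gen S (M \<union> {b})"
    by (meson Un_upper1 ideal_gen_sup subset_trans)+
  have "phi S M" unfolding phi_def
  proof (intro exI[of _ "Pa @ Pb"] conjI allI impI)
    show "\<forall>P\<in>set (Pa @ Pb). prime_ideal_of S P \<and> M \<subseteq> P"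
    proof
      fix P assume "P \<in> set (Pa @ Pb)"
      then have "P \<in> set Pa \<or> P \<in> set Pb" by simp
      then show "prime_ideal_of S P \<and> M \<subseteq> P"
      proof
        assume "P \<in> set Pa" then show ?thesis using Pa1 Ma(1) by (meson subset_trans)
      next
        assume "P \<in> set Pb" then show ?thesis using Pb1 Ma(2) by (meson subset_trans)
      qed
    qed
    fix xs :: "'a list" assume h: "length xs = length (Pa @ Pb) \<and> (\<forall>i<length (Pa @ Pb). xs ! i \<in> (Pa @ Pb) ! i)"
    define x1 where "x1 = take (length Pa) xs"
    define x2 where "x2 = drop (length Pa) xs"
    have "xs = x1 @ x2" by (simp add: x1_def x2_def)
    then have pr: "prod_list xs = prod_list x1 * prod_list x2" by simp
    have "prod_list x1 \<in> ideal_gen S (M \<union> {a})"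
    proof (rule Pa2)
      show "length x1 = length Pa" using h by (simp add: x1_def)
      show "\<forall>i<length Pa. x1 ! i \<in> Pa ! i"
      proof (intro allI impI)
        fix i assume "i < length Pa"
        then show "x1 ! i \<in> Pa ! i" using h[THEN conjunct2, rule_format, of i] by (simp add: x1_def nth_append)
      qed
    qed
    then obtain m s where ms: "m \<in> M" "s \<in> S" "prod_list x1 = m + s * a"
      using ideal_gen_insert[OF S Mi ab(1)] by auto
    have "prod_list x2 \<in> ideal_gen S (M \<union> {b})"
    proof (rule Pb2)
      show "length x2 = length Pb" using h by (simp add: x2_def)
      show "\<forall>i<length Pb. x2 ! i \<in> Pb ! i"
      proof (intro allI impI)
        fix i assume "i < length Pb"
        have "length Pa \<le> length xs" using h by simp
        then show "x2 ! i \<in> Pb ! i" using h[THEN conjunct2, rule_format, of "length Pa + i"] \<open>i < length Pb\<close>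
          by (simp add: x2_def nth_append)
      qed
    qed
    then obtain m' t where mt: "m' \<in> M" "t \<in> S" "prod_list x2 = m' + t * b"
      using ideal_gen_insert[OF S Mi ab(2)] by auto
    have MS: "m \<in> S" "m' \<in> S" using ms mt idealD(1)[OF Mi] by auto
    have eq: "prod_list xs = m * (m' + t * b) + (s * a) * m' + (s * t) * (a * b)"
      using pr ms(3) mt(3) by (simp add: algebra_simps)
    have "m' + t * b \<in> S" using MS mt subringD(3,4)[OF S] ab by simp
    then have 1: "m * (m' + t * b) \<in> M" using idealD(6)[OF Mi] ms(1) by blast
    have "s * a \<in> S" using subringD(4)[OF S ms(2) ab(1)] .
    then have 2: "(s * a) * m' \<in> M" using idealD(5)[OF Mi] mt(1) by blast
    have "s * t \<in> S" using subringD(4)[OF S ms(2) mt(2)] .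
    then have 3: "(s * t) * (a * b) \<in> M" using idealD(5)[OF Mi] ab(3) by blast
    show "prod_list xs \<in> M" unfolding eq using 1 2 3 idealD(3)[OF Mi] by blast
  qed
  then show False using Mp by simp
qed

lemma noeth_finite_primes:
  assumes S: "subring_of S" and N: "noetherian_on S" and I: "ideal_of S I"
  shows "\<exists>\<P>. finite \<P> \<and> (\<forall>P\<in>\<P>. prime_ideal_of S P \<and> I \<subseteq> P) \<and>
            (\<forall>Q. prime_ideal_of S Q \<and> I \<subseteq> Q \<longrightarrow> (\<exists>P\<in>\<P>. P \<subseteq> Q))"
  using phi_contains[OF S noeth_phi[OF S N I]] .


lemma height_of_chain: "prime_chain S k f \<Longrightarrow> enat k \<le> height_prime S (f k)"
  unfolding height_prime_def by (rule Sup_upper) blast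

lemma chain_of_height:
  assumes P: "prime_ideal_of S P" and h: "enat h \<le> height_prime S P"
  shows "\<exists>k f. h \<le> k \<and> prime_chain S k f \<and> f k = P"
proof (cases h)
  case 0
  have "prime_chain S 0 (\<lambda>_. P)" using P by (simp add: prime_chain_def)
  then show ?thesis using 0 by blast
next
  case (Suc h')
  show ?thesis
  proof (rule ccontr)
    assume nt: "\<not> ?thesis"
    have "\<forall>x\<in>{enat k | k. \<exists>f. prime_chain S k f \<and> f k = P}. x \<le> enat h'"
    proof
      fix x assume "x \<in> {enat k | k. \<exists>f. prime_chain S k f \<and> f k = P}"
      then obtain k f where "x = enat k" "prime_chain S k f" "f k = P" by blast
      then show "x \<le> enat h'" using nt Suc by (metis enat_ord_simps(1) not_less_eq_eq)
    qed
    then have "height_prime S P \<le> enat h'" unfolding height_prime_def by (intro Sup_least) blast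
    with h Suc have "enat (Suc h') \<le> enat h'" by (metis order_trans)
    then show False by simp
  qed
qed

lemma height_step:
  assumes P: "prime_ideal_of S P" and Q: "prime_ideal_of S Q" and PQ: "P \<subset> Q"
    and h: "enat h \<le> height_prime S P"
  shows "enat (Suc h) \<le> height_prime S Q"
proof -
  obtain k f where k: "h \<le> k" "prime_chain S k f" "f k = P" using chain_of_height[OF P h] by blast
  define g where "g = f(Suc k := Q)"
  have "prime_chain S (Suc k) g"
    unfolding prime_chain_def
  proof (intro conjI allI impI)
    fix i assume "i \<le> Suc k"
    then show "prime_ideal_of S (g i)" using k(2) Q by (cases "i = Suc k") (auto simp: g_def prime_chain_def)
  next
    fix i assume "i < Suc k"
    show "g i \<subset> g (Suc i)"
    proof (cases "i = k")
      case True then show ?thesis using PQ k(3) by (simp add: g_def)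
    next
      case False
      then have "i < k" using \<open>i < Suc k\<close> by simp
      then show ?thesis using k(2) by (simp add: g_def prime_chain_def)
    qed
  qed
  then have "enat (Suc k) \<le> height_prime S (g (Suc k))" by (rule height_of_chain)
  then show ?thesis using k(1) by (simp add: g_def) (meson enat_ord_simps(1) Suc_le_mono order_trans)
qed

lemma height_mono:
  assumes P: "prime_ideal_of S P" and Q: "prime_ideal_of S Q" and PQ: "P \<subseteq> Q"
    and h: "enat h \<le> height_prime S P"
  shows "enat h \<le> height_prime S Q"
proof (cases "P = Q")
  case True then show ?thesis using h by simp
next
  case False
  then have "enat (Suc h) \<le> height_prime S Q" using height_step[OF P Q _ h] PQ by auto
  then show ?thesis by (meson Suc_n_not_le_n enat_ord_simps(1) nle_le order_trans)
qed

lemma ideal_height_le: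
  "enat h \<le> ideal_height S I \<Longrightarrow> prime_ideal_of S Q \<Longrightarrow> I \<subseteq> Q \<Longrightarrow> enat h \<le> height_prime S Q"
  unfolding ideal_height_def by (rule order_trans, assumption, rule Inf_lower) blast

lemma ideal_height_ge:
  "(\<And>Q. prime_ideal_of S Q \<Longrightarrow> I \<subseteq> Q \<Longrightarrow> enat h \<le> height_prime S Q) \<Longrightarrow> enat h \<le> ideal_height S I"
  unfolding ideal_height_def by (rule Inf_greatest) blast


definition cs :: "'a::comm_ring_1 set \<Rightarrow> 'a \<Rightarrow> 'a set" where
  "cs H a = {b. a - b \<in> H}"

lemma residue_cosets_cs: "residue_cosets H = range (cs H)"
  unfolding residue_cosets_def cs_def by simp

lemma cs_eq:
  assumes H: "ideal_of UNIV H" and z: "z \<in> cs H a" "z \<in> cs H b"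
  shows "cs H a = cs H b"
proof -
  have ab: "a - b \<in> H"
  proof -
    from z have "a - z \<in> H" "b - z \<in> H" by (simp_all add: cs_def)
    then have "(a - z) - (b - z) \<in> H" by (rule idealD(7)[OF H])
    then show ?thesis by simp
  qed
  show ?thesis
  proof (intro set_eqI iffI)
    fix w assume "w \<in> cs H a"
    then have "a - w \<in> H" by (simp add: cs_def)
    have "b - w = (a - w) - (a - b)" by simp
    then show "w \<in> cs H b" using idealD(7)[OF H \<open>a - w \<in> H\<close> ab] by (simp add: cs_def)
  next
    fix w assume "w \<in> cs H b"
    then have "b - w \<in> H" by (simp add: cs_def)
    have "a - w = (b - w) + (a - b)" by simp
    then show "w \<in> cs H a" using idealD(3)[OF H \<open>b - w \<in> H\<close> ab] by (simp add: cs_def)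
  qed
qed

lemma neumann:
  fixes HH :: "'a::comm_ring_1 set set"
  assumes "finite HH" "\<forall>H\<in>HH. ideal_of UNIV H \<and> infinite (residue_cosets H)"
  shows "finite C \<Longrightarrow> (\<forall>p\<in>C. snd p \<in> HH) \<Longrightarrow> \<exists>x. \<forall>p\<in>C. x \<notin> cs (snd p) (fst p)"
  using assms
proof (induction HH arbitrary: C rule: finite_induct)
  case empty
  then show ?case by auto
next
  case (insert H0 HH C)
  have H0: "ideal_of UNIV H0" "infinite (residue_cosets H0)" using insert.prems by auto
  define C0 where "C0 = fst ` {p\<in>C. snd p = H0}"
  define C1 where "C1 = {p\<in>C. snd p \<noteq> H0}"
  have fC0: "finite C0" using insert.prems(1) by (simp add: C0_def)
  have fC1: "finite C1" using insert.prems(1) by (simp add: C1_def)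
  have "finite (cs H0 ` C0)" using fC0 by simp
  then have "\<not> (range (cs H0) \<subseteq> cs H0 ` C0)" using H0(2) residue_cosets_cs
    by (metis finite_subset)
  then obtain b where b: "cs H0 b \<notin> cs H0 ` C0" by auto
  define C' where "C' = C1 \<union> (\<lambda>(a0, p). (a0 - b + fst p, snd p)) ` (C0 \<times> C1)"
  have "finite C'" using fC0 fC1 by (simp add: C'_def)
  moreover have "\<forall>p\<in>C'. snd p \<in> HH"
    using insert.prems(2) by (auto simp: C'_def C1_def)
  ultimately have "\<exists>x. \<forall>p\<in>C'. x \<notin> cs (snd p) (fst p)"
    using insert.prems(3) by (intro insert.IH) auto
  then obtain x where x: "\<forall>p\<in>C'. x \<notin> cs (snd p) (fst p)" by blast
  show ?case
  proof (cases "\<exists>a0\<in>C0. x \<in> cs H0 a0")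
    case False
    have "x \<notin> cs (snd p) (fst p)" if "p \<in> C" for p
    proof (cases "snd p = H0")
      case True
      then have "fst p \<in> C0" using that by (auto simp: C0_def)
      then show ?thesis using False True by auto
    next
      case False
      then have "p \<in> C'" using that by (auto simp: C'_def C1_def)
      then show ?thesis using x by auto
    qed
    then show ?thesis by blast
  next
    case True
    then obtain a0 where a0: "a0 \<in> C0" "a0 - x \<in> H0" by (auto simp: cs_def)
    define y where "y = x - a0 + b"
    have yb: "y \<in> cs H0 b" using a0 by (simp add: cs_def y_def algebra_simps)
    have "y \<notin> cs (snd p) (fst p)" if "p \<in> C" for p
    proof (cases "snd p = H0")
      case True
      then have "fst p \<in> C0" using that by (auto simp: C0_def)
      show ?thesis
      proof
        assume "y \<in> cs (snd p) (fst p)"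
        then have "cs H0 (fst p) = cs H0 b" using cs_eq[OF H0(1) _ yb] True by simp
        then show False using b \<open>fst p \<in> C0\<close> by (metis image_eqI)
      qed
    next
      case False
      then have pC1: "p \<in> C1" using that by (simp add: C1_def)
      show ?thesis
      proof
        assume "y \<in> cs (snd p) (fst p)"
        then have "(a0 - b + fst p) - x \<in> snd p" by (simp add: cs_def y_def algebra_simps)
        moreover have "(a0 - b + fst p, snd p) \<in> C'" using a0(1) pC1
          unfolding C'_def by (intro UnI2) (auto intro!: image_eqI[of _ _ "(a0, p)"])
        ultimately show False using x by (auto simp: cs_def)
      qed
    qed
    then show ?thesis by blast
  qed
qed

lemma prime_pow_notin:
  assumes P: "prime_ideal_of (UNIV::'a::comm_ring_1 set) P" and a: "a \<notin> P"
  shows "a ^ k \<notin> P"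
proof (induction k)
  case 0 then show ?case using prime_one_notin[OF subring_UNIV P] by simp
next
  case (Suc k) then show ?case using prime_ideal_mult[OF P, of a "a ^ k"] a by auto
qed

lemma finite_residue_maximal:
  assumes P: "prime_ideal_of (UNIV::'a::comm_ring_1 set) P" and fin: "finite (residue_cosets P)"
  shows "maximal_ideal_of UNIV P"
  unfolding maximal_ideal_of_def
proof (intro conjI allI impI)
  have PI: "ideal_of UNIV P" using P by (rule prime_ideal_ideal)
  show "ideal_of UNIV P" by (rule PI)
  show "P \<noteq> UNIV" using P by (rule prime_ideal_ne)
  fix I assume I: "ideal_of UNIV I \<and> P \<subseteq> I"
  show "I = P \<or> I = UNIV"
  proof (cases "I = P")
    case True then show ?thesis by simp
  next
    case False
    then obtain a where aI: "a \<in> I" and aP: "a \<notin> P" using I by auto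
    have "finite (range (\<lambda>k::nat. cs P (a ^ k)))"
      using fin residue_cosets_cs by (metis finite_subset image_subset_iff rangeI)
    then have "\<not> inj (\<lambda>k::nat. cs P (a ^ k))" using finite_imageD infinite_UNIV_nat by blast
    then obtain i j where ij: "i \<noteq> j" "cs P (a ^ i) = cs P (a ^ j)" unfolding inj_def by blast
    have mem: "a ^ j - a ^ i \<in> P" "a ^ i - a ^ j \<in> P"
    proof -
      have "a ^ i \<in> cs P (a ^ i)" "a ^ j \<in> cs P (a ^ j)" using idealD(2)[OF PI] by (auto simp: cs_def)
      then show "a ^ j - a ^ i \<in> P" "a ^ i - a ^ j \<in> P" using ij(2) by (auto simp: cs_def)
    qed
    obtain u v where uv: "u < v" "a ^ u - a ^ v \<in> P"
    proof (cases "i < j")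
      case True then show ?thesis using that mem by blast
    next
      case False then have "j < i" using ij(1) by simp
      then show ?thesis using that mem by blast
    qed
    have "a ^ u - a ^ v = a ^ u * (1 - a ^ (v - u))"
      using uv(1) by (simp add: algebra_simps power_add[symmetric])
    then have "1 - a ^ (v - u) \<in> P"
      using prime_ideal_mult[OF P, of "a ^ u" "1 - a ^ (v - u)"] uv(2) prime_pow_notin[OF P aP] by auto
    then have 1: "1 - a ^ (v - u) \<in> I" using I by auto
    have "a ^ (v - u) = a ^ (v - u - 1) * a" using uv(1)
      by (metis Suc_diff_Suc diff_Suc_1 power_Suc2 zero_less_diff)
    then have 2: "a ^ (v - u) \<in> I" using idealD(5)[OF I[THEN conjunct1] _ aI] by simp
    have "1 \<in> I" using idealD(3)[OF I[THEN conjunct1] 1 2] by simp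
    then show ?thesis using ideal_one_iff[OF subring_UNIV] I by blast
  qed
qed

lemma residue_infinite_prime:
  assumes P: "prime_ideal_of (UNIV::'a::comm_ring_1 set) P"
    and res: "\<And>M. maximal_ideal_of (UNIV :: 'a set) M \<Longrightarrow> infinite (residue_cosets M)"
  shows "infinite (residue_cosets P)"
  using finite_residue_maximal[OF P] res by blast


locale hb =
  fixes S T :: "'b::comm_ring_1 set" and x :: 'b and coef :: "nat \<Rightarrow> 'b \<Rightarrow> 'b"
  assumes S: "subring_of S" and T: "subring_of T" and ST: "S \<subseteq> T" and x: "x \<in> T"
    and c_S: "\<And>f i. f \<in> T \<Longrightarrow> coef i f \<in> S"
    and c_add: "\<And>f g i. f \<in> T \<Longrightarrow> g \<in> T \<Longrightarrow> coef i (f + g) = coef i f + coef i g"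
    and c_smult: "\<And>s f i. s \<in> S \<Longrightarrow> f \<in> T \<Longrightarrow> coef i (s * f) = s * coef i f"
    and c_x: "\<And>f i. f \<in> T \<Longrightarrow> coef i (x * f) = (if i = 0 then 0 else coef (i - 1) f)"
    and c_zero: "\<And>f. f \<in> T \<Longrightarrow> (\<forall>i. coef i f = 0) \<Longrightarrow> f = 0"
    and c_fin: "\<And>f. f \<in> T \<Longrightarrow> \<exists>N. \<forall>i\<ge>N. coef i f = 0"
begin

lemma T0: "0 \<in> T" using subringD(1)[OF T] .

lemma coef_0: "coef i 0 = 0"
proof -
  have "coef i (0 + 0) = coef i 0 + coef i 0" using c_add[OF T0 T0] .
  then show ?thesis by simp
qed

lemma coef_neg: "f \<in> T \<Longrightarrow> coef i (- f) = - coef i f"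
proof -
  assume f: "f \<in> T"
  have "coef i (f + - f) = coef i f + coef i (- f)" using c_add[OF f subringD(5)[OF T f]] .
  then show ?thesis by (simp add: coef_0 eq_neg_iff_add_eq_0 add.commute)
qed

lemma coef_diff: "f \<in> T \<Longrightarrow> g \<in> T \<Longrightarrow> coef i (f - g) = coef i f - coef i g"
  using c_add[OF _ subringD(5)[OF T], of f g i] coef_neg[of g i] by simp

lemma coef_sum: "finite G \<Longrightarrow> (\<And>g. g \<in> G \<Longrightarrow> h g \<in> T) \<Longrightarrow> coef i (sum h G) = (\<Sum>g\<in>G. coef i (h g))"
proof (induction G rule: finite_induct)
  case empty then show ?case by (simp add: coef_0)
next
  case (insert a G)
  have "sum h G \<in> T" using insert by (intro subring_sum[OF T]) auto
  then show ?case using insert c_add[of "h a" "sum h G" i] by simp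
qed

lemma coef_xpow: "f \<in> T \<Longrightarrow> coef i (x ^ m * f) = (if i < m then 0 else coef (i - m) f)"
proof (induction m arbitrary: i)
  case 0 then show ?case by simp
next
  case (Suc m)
  have "x ^ m * f \<in> T" using subringD(4)[OF T subring_pow[OF T x] Suc.prems] .
  then have "coef i (x ^ Suc m * f) = (if i = 0 then 0 else coef (i - 1) (x ^ m * f))"
    using c_x[of "x ^ m * f" i] by (simp add: mult.assoc)
  then show ?case using Suc.IH[OF Suc.prems, of "i - 1"] by auto
qed

definition Lk :: "'b set \<Rightarrow> nat \<Rightarrow> 'b set" where
  "Lk I k = {coef k f | f. f \<in> I \<and> (\<forall>i>k. coef i f = 0)}"

lemma LkI: "f \<in> I \<Longrightarrow> \<forall>i>k. coef i f = 0 \<Longrightarrow> a = coef k f \<Longrightarrow> a \<in> Lk I k"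
  unfolding Lk_def by auto

lemma LkE: assumes "a \<in> Lk I k" obtains f where "f \<in> I" "\<forall>i>k. coef i f = 0" "a = coef k f"
  using assms unfolding Lk_def by auto

lemma Lk_ideal:
  assumes I: "ideal_of T I"
  shows "ideal_of S (Lk I k)"
proof (rule idealI)
  have IT: "f \<in> I \<Longrightarrow> f \<in> T" for f using idealD(1)[OF I] by auto
  show "Lk I k \<subseteq> S"
  proof
    fix a assume "a \<in> Lk I k"
    then obtain f where "f \<in> I" "a = coef k f" by (rule LkE)
    then show "a \<in> S" using c_S[OF IT] by simp
  qed
  show "0 \<in> Lk I k" by (rule LkI[OF idealD(2)[OF I]]) (simp_all add: coef_0)
next
  have IT: "f \<in> I \<Longrightarrow> f \<in> T" for f using idealD(1)[OF I] by auto
  fix a b assume "a \<in> Lk I k" "b \<in> Lk I k"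
  then obtain f g where fg: "f \<in> I" "\<forall>i>k. coef i f = 0" "a = coef k f" "g \<in> I" "\<forall>i>k. coef i g = 0" "b = coef k g"
    by (metis LkE)
  show "a + b \<in> Lk I k"
    by (rule LkI[OF idealD(3)[OF I fg(1,4)]]) (use fg c_add[OF IT[OF fg(1)] IT[OF fg(4)]] in simp_all)
next
  have IT: "f \<in> I \<Longrightarrow> f \<in> T" for f using idealD(1)[OF I] by auto
  fix a assume "a \<in> Lk I k"
  then obtain f where f: "f \<in> I" "\<forall>i>k. coef i f = 0" "a = coef k f" by (rule LkE)
  show "- a \<in> Lk I k"
    by (rule LkI[OF idealD(4)[OF I f(1)]]) (use f coef_neg[OF IT[OF f(1)]] in simp_all)
next
  have IT: "f \<in> I \<Longrightarrow> f \<in> T" for f using idealD(1)[OF I] by auto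
  fix s a assume s: "s \<in> S" and "a \<in> Lk I k"
  then obtain f where f: "f \<in> I" "\<forall>i>k. coef i f = 0" "a = coef k f" by (metis LkE)
  have sT: "s \<in> T" using s ST by auto
  show "s * a \<in> Lk I k"
    by (rule LkI[OF idealD(5)[OF I sT f(1)]]) (use f c_smult[OF s IT[OF f(1)]] in simp_all)
qed

lemma Lk_Suc:
  assumes I: "ideal_of T I"
  shows "Lk I k \<subseteq> Lk I (Suc k)"
proof
  have IT: "f \<in> I \<Longrightarrow> f \<in> T" for f using idealD(1)[OF I] by auto
  fix a assume "a \<in> Lk I k"
  then obtain f where f: "f \<in> I" "\<forall>i>k. coef i f = 0" "a = coef k f" by (rule LkE)
  show "a \<in> Lk I (Suc k)"
    by (rule LkI[OF idealD(5)[OF I x f(1)]]) (use f c_x[OF IT[OF f(1)]] in auto)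
qed

lemma Lk_mono:
  assumes I: "ideal_of T I" and "k \<le> k'"
  shows "Lk I k \<subseteq> Lk I k'"
  using assms(2)
proof (induction k' rule: dec_induct)
  case base then show ?case by simp
next
  case (step n) then show ?case using Lk_Suc[OF I, of n] by auto
qed

theorem hilbert:
  assumes N: "noetherian_on S"
  shows "noetherian_on T"
  unfolding noetherian_on_def
proof (intro allI impI)
  fix I assume I: "ideal_of T I"
  have IT: "f \<in> I \<Longrightarrow> f \<in> T" for f using idealD(1)[OF I] by blast
  let ?L = "\<Union>(range (Lk I))"
  have Lid: "ideal_of S ?L"
  proof (rule chain_union_ideal)
    show "range (Lk I) \<noteq> {}" by simp
    show "\<And>J. J \<in> range (Lk I) \<Longrightarrow> ideal_of S J" using Lk_ideal[OF I] by blast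
    fix J K assume "J \<in> range (Lk I)" "K \<in> range (Lk I)"
    then obtain j k where "J = Lk I j" "K = Lk I k" by blast
    then show "J \<subseteq> K \<or> K \<subseteq> J" using Lk_mono[OF I, of j k] Lk_mono[OF I, of k j] by (cases "j \<le> k") auto
  qed
  obtain F where F: "finite F" "F \<subseteq> ?L" "?L = ideal_gen S F"
    using N[unfolded noetherian_on_def, rule_format, OF Lid] by (elim exE conjE) blast
  have "\<forall>c\<in>F. \<exists>k. c \<in> Lk I k" using F(2) by blast
  then obtain kf where kf: "\<And>c. c \<in> F \<Longrightarrow> c \<in> Lk I (kf c)" by metis
  define D where "D = Max (insert 0 (kf ` F))"
  have "F \<subseteq> Lk I D"
  proof
    fix c assume c: "c \<in> F"
    have "kf c \<le> D" unfolding D_def using F(1) c by (intro Max_ge) auto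
    then show "c \<in> Lk I D" using Lk_mono[OF I] kf[OF c] by blast
  qed
  then have LD: "?L \<subseteq> Lk I D" using F(3) ideal_gen_least[OF Lk_ideal[OF I]] by simp
  have Lkk: "Lk I k \<subseteq> Lk I (min k D)" for k
  proof (cases "k \<le> D")
    case True then show ?thesis by simp
  next
    case False then show ?thesis using LD by (auto simp: min_def)
  qed
  have "\<forall>k. \<exists>G. finite G \<and> G \<subseteq> Lk I k \<and> Lk I k = ideal_gen S G"
    using N[unfolded noetherian_on_def] Lk_ideal[OF I] by blast
  then obtain G where G: "\<And>k. finite (G k)" "\<And>k. G k \<subseteq> Lk I k" "\<And>k. Lk I k = ideal_gen S (G k)"
    by metis
  have "\<forall>k. \<forall>g\<in>G k. \<exists>w. w \<in> I \<and> (\<forall>i>k. coef i w = 0) \<and> coef k w = g"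
    using G(2) unfolding Lk_def by blast
  then obtain wit where wit: "\<And>k g. g \<in> G k \<Longrightarrow> wit k g \<in> I \<and> (\<forall>i>k. coef i (wit k g) = 0) \<and> coef k (wit k g) = g"
    by metis
  define W where "W = (\<Union>k\<in>{..D}. wit k ` G k)"
  have fW: "finite W" unfolding W_def using G(1) by auto
  have WI: "W \<subseteq> I" unfolding W_def using wit by auto
  have WT: "W \<subseteq> T" using WI IT by auto
  have GW: "ideal_of T (ideal_gen T W)" using ideal_gen_ideal[OF T WT] .
  have main: "\<forall>f. f \<in> I \<longrightarrow> (\<forall>i\<ge>n. coef i f = 0) \<longrightarrow> f \<in> ideal_gen T W" for n
  proof (induction n)
    case 0
    show ?case
    proof (intro allI impI)
      fix f assume "f \<in> I" "\<forall>i\<ge>0. coef i f = 0"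
      then have "f = 0" using c_zero[OF IT] by auto
      then show "f \<in> ideal_gen T W" using idealD(2)[OF GW] by simp
    qed
  next
    case (Suc N)
    show ?case
    proof (intro allI impI)
      fix f assume fI: "f \<in> I" and fz: "\<forall>i\<ge>Suc N. coef i f = 0"
      define k0 where "k0 = min N D"
      have "coef N f \<in> Lk I N" unfolding Lk_def using fI fz by auto
      then have "coef N f \<in> ideal_gen S (G k0)" using Lkk[of N] G(3)[of k0] unfolding k0_def by auto
      then obtain s where s: "\<And>g. s g \<in> S" "coef N f = (\<Sum>g\<in>G k0. s g * g)"
        using ideal_gen_finite[OF S G(1)[of k0] order_trans[OF G(2) Lk_ideal[OF I, THEN idealD(1)]]] by blast
      define m where "m = N - k0"
      have k0N: "k0 \<le> N" "k0 \<le> D" by (auto simp: k0_def)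
      define t where "t g = s g * (x ^ m * wit k0 g)" for g
      have wT: "g \<in> G k0 \<Longrightarrow> x ^ m * wit k0 g \<in> T" for g
        using subringD(4)[OF T subring_pow[OF T x] IT] wit by blast
      have tI: "g \<in> G k0 \<Longrightarrow> t g \<in> I" for g
        unfolding t_def using idealD(5)[OF I _ idealD(5)[OF I subring_pow[OF T x]]] wit s(1) ST by blast
      have tT: "g \<in> G k0 \<Longrightarrow> t g \<in> T" for g using tI IT by blast
      have tW: "g \<in> G k0 \<Longrightarrow> t g \<in> ideal_gen T W" for g
      proof -
        assume g: "g \<in> G k0"
        have "wit k0 g \<in> W" unfolding W_def using g k0N by auto
        then have "wit k0 g \<in> ideal_gen T W" using ideal_gen_sup by blast
        then show ?thesis unfolding t_def
          using idealD(5)[OF GW _ idealD(5)[OF GW subring_pow[OF T x]]] s(1) ST by blast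
      qed
      define h where "h = f - sum t (G k0)"
      have sT: "sum t (G k0) \<in> T" using tT by (intro subring_sum[OF T]) auto
      have "sum t (G k0) \<in> I" by (rule ideal_sum[OF I tI])
      then have hI: "h \<in> I" unfolding h_def by (rule idealD(7)[OF I fI])
      have ct: "coef i (t g) = s g * (if i < m then 0 else coef (i - m) (wit k0 g))" if "g \<in> G k0" for g i
        unfolding t_def using c_smult[OF s(1) wT[OF that]] coef_xpow[of "wit k0 g" i m] wit[OF that] IT by auto
      have hz: "\<forall>i\<ge>N. coef i h = 0"
      proof (intro allI impI)
        fix i assume iN: "N \<le> i"
        have ch: "coef i h = coef i f - (\<Sum>g\<in>G k0. coef i (t g))"
          unfolding h_def using coef_diff[OF IT[OF fI] sT] coef_sum[OF G(1) tT] by simp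
        show "coef i h = 0"
        proof (cases "i = N")
          case True
          have "(\<Sum>g\<in>G k0. coef i (t g)) = (\<Sum>g\<in>G k0. s g * g)"
          proof (rule sum.cong)
            fix g assume g: "g \<in> G k0"
            have "\<not> i < m" "i - m = k0" using True k0N by (auto simp: m_def)
            then show "coef i (t g) = s g * g" using ct[OF g, of i] wit[OF g] by simp
          qed simp
          then show ?thesis using ch s(2) True by simp
        next
          case False
          then have iN': "i > N" using iN by simp
          have "(\<Sum>g\<in>G k0. coef i (t g)) = 0"
          proof (rule sum.neutral, rule ballI)
            fix g assume g: "g \<in> G k0"
            have "\<not> i < m" "i - m > k0" using iN' k0N by (auto simp: m_def)
            then show "coef i (t g) = 0" using ct[OF g, of i] wit[OF g] by simp
          qed
          then show ?thesis using ch fz iN' by simp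
        qed
      qed
      have "h \<in> ideal_gen T W" using Suc.IH hI hz by blast
      moreover have "sum t (G k0) \<in> ideal_gen T W" by (rule ideal_sum[OF GW tW])
      ultimately have "h + sum t (G k0) \<in> ideal_gen T W" by (rule idealD(3)[OF GW])
      then show "f \<in> ideal_gen T W" unfolding h_def by simp
    qed
  qed
  have "I \<subseteq> ideal_gen T W"
  proof
    fix f assume fI: "f \<in> I"
    obtain n where "\<forall>i\<ge>n. coef i f = 0"
    proof -
      have "f \<in> T" using IT fI .
      then show ?thesis using that c_fin by blast
    qed
    then show "f \<in> ideal_gen T W" using main fI by blast
  qed
  moreover have "ideal_gen T W \<subseteq> I" using ideal_gen_least[OF I WI] .
  ultimately show "\<exists>F. finite F \<and> F \<subseteq> I \<and> I = ideal_gen T F" using fW WI by blast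
qed

end


lemma keys_add_nat: "Poly_Mapping.keys (a + b :: nat \<Rightarrow>\<^sub>0 nat) = Poly_Mapping.keys a \<union> Poly_Mapping.keys b"
  by (auto simp: in_keys_iff lookup_add)

lemma mpoly_ring_iff: "p \<in> mpoly_ring n \<longleftrightarrow> (\<forall>m\<in>Poly_Mapping.keys p. Poly_Mapping.keys m \<subseteq> {1..n})"
  unfolding mpoly_ring_def by simp

lemma mpoly_subring: "subring_of (mpoly_ring n :: ((nat \<Rightarrow>\<^sub>0 nat) \<Rightarrow>\<^sub>0 'a::comm_ring_1) set)"
  unfolding subring_of_def
proof (intro conjI ballI)
  show "0 \<in> mpoly_ring n" by (simp add: mpoly_ring_iff)
  show "1 \<in> mpoly_ring n" by (simp add: mpoly_ring_iff)
  fix a b :: "(nat \<Rightarrow>\<^sub>0 nat) \<Rightarrow>\<^sub>0 'a" assume a: "a \<in> mpoly_ring n" and b: "b \<in> mpoly_ring n"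
  show "a + b \<in> mpoly_ring n" using a b keys_add[of a b] by (auto simp: mpoly_ring_iff)
  show "- a \<in> mpoly_ring n" using a by (simp add: mpoly_ring_iff keys_def)
  show "a * b \<in> mpoly_ring n" unfolding mpoly_ring_iff
  proof
    fix m assume "m \<in> Poly_Mapping.keys (a * b)"
    then obtain u w where "m = u + w" "u \<in> Poly_Mapping.keys a" "w \<in> Poly_Mapping.keys b"
      using keys_mult[of a b] by blast
    then show "Poly_Mapping.keys m \<subseteq> {1..n}" using a b by (auto simp: mpoly_ring_iff keys_add_nat)
  qed
qed

lemma mpoly_mono: "n \<le> n' \<Longrightarrow> mpoly_ring n \<subseteq> mpoly_ring n'"
proof
  fix p assume "n \<le> n'" "p \<in> mpoly_ring n"
  moreover have "{1..n} \<subseteq> {1..n'}" using \<open>n \<le> n'\<close> by auto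
  ultimately show "p \<in> mpoly_ring n'" unfolding mpoly_ring_def by blast
qed

lemma mvar_in: "1 \<le> i \<Longrightarrow> i \<le> n \<Longrightarrow> mvar i \<in> mpoly_ring n"
  unfolding mpoly_ring_def mvar_def by simp

lemma mconst_in: "mconst c \<in> mpoly_ring n"
  unfolding mpoly_ring_def mconst_def by simp

lemma sum_when_add:
  fixes a b :: "nat \<Rightarrow>\<^sub>0 nat"
  shows "Sum_any (\<lambda>q. (g q when b = a + q)) = (if (\<exists>q. b = a + q) then g (b - a) else 0)"
proof (cases "\<exists>q. b = a + q")
  case True
  have "(b = a + q) \<longleftrightarrow> (q = b - a)" for q using True by auto
  then show ?thesis using True by simp
next
  case False
  then show ?thesis by simp
qed

lemma lookup_single_mult:
  fixes p :: "(nat \<Rightarrow>\<^sub>0 nat) \<Rightarrow>\<^sub>0 'a::comm_ring_1"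
  shows "Poly_Mapping.lookup (Poly_Mapping.single e c * p) m = (if (\<exists>q. m = e + q) then c * Poly_Mapping.lookup p (m - e) else 0)"
proof -
  have "Poly_Mapping.lookup (Poly_Mapping.single e c * p) m =
      Sum_any (\<lambda>l. Poly_Mapping.lookup (Poly_Mapping.single e c) l * Sum_any (\<lambda>q. Poly_Mapping.lookup p q when m = l + q))"
    by (rule Poly_Mapping.lookup_mult)
  also have "\<dots> = Sum_any (\<lambda>l. (c * Sum_any (\<lambda>q. Poly_Mapping.lookup p q when m = l + q)) when e = l)"
    by (simp add: lookup_single when_mult)
  also have "\<dots> = c * Sum_any (\<lambda>q. Poly_Mapping.lookup p q when m = e + q)" by simp
  also have "\<dots> = (if (\<exists>q. m = e + q) then c * Poly_Mapping.lookup p (m - e) else 0)"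
    by (simp add: sum_when_add)
  finally show ?thesis .
qed


lemma ex_add_iff:
  fixes a b :: "nat \<Rightarrow>\<^sub>0 nat"
  shows "(\<exists>q. b = a + q) \<longleftrightarrow> (\<forall>k. Poly_Mapping.lookup a k \<le> Poly_Mapping.lookup b k)"
proof
  assume "\<exists>q. b = a + q"
  then show "\<forall>k. Poly_Mapping.lookup a k \<le> Poly_Mapping.lookup b k" by (auto simp: lookup_add)
next
  assume h: "\<forall>k. Poly_Mapping.lookup a k \<le> Poly_Mapping.lookup b k"
  have "b = a + (b - a)" by (rule poly_mapping_eqI) (use h in \<open>simp add: lookup_add lookup_minus\<close>)
  then show "\<exists>q. b = a + q" by blast
qed

definition pc :: "nat \<Rightarrow> nat \<Rightarrow> ((nat \<Rightarrow>\<^sub>0 nat) \<Rightarrow>\<^sub>0 'a) \<Rightarrow> ((nat \<Rightarrow>\<^sub>0 nat) \<Rightarrow>\<^sub>0 'a::comm_ring_1)" where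
  "pc v i p = Abs_poly_mapping (\<lambda>m. if Poly_Mapping.lookup m v = 0 then Poly_Mapping.lookup p (m + Poly_Mapping.single v i) else 0)"

lemma lookup_pc:
  "Poly_Mapping.lookup (pc v i p) m = (if Poly_Mapping.lookup m v = 0 then Poly_Mapping.lookup p (m + Poly_Mapping.single v i) else 0)"
proof -
  let ?f = "\<lambda>m. if Poly_Mapping.lookup m v = 0 then Poly_Mapping.lookup p (m + Poly_Mapping.single v i) else 0"
  have inj: "inj (\<lambda>m::nat \<Rightarrow>\<^sub>0 nat. m + Poly_Mapping.single v i)" by (rule injI) simp
  have "{m. ?f m \<noteq> 0} \<subseteq> (\<lambda>m. m + Poly_Mapping.single v i) -` Poly_Mapping.keys p"
    by (auto simp: in_keys_iff split: if_splits)
  moreover have "finite ((\<lambda>m. m + Poly_Mapping.single v i) -` Poly_Mapping.keys p)"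
    by (rule finite_vimageI[OF finite_keys inj])
  ultimately have "finite {m. ?f m \<noteq> 0}" by (rule finite_subset)
  then show ?thesis unfolding pc_def by simp
qed

lemma mvar_pow: "(mvar v :: (nat \<Rightarrow>\<^sub>0 nat) \<Rightarrow>\<^sub>0 'a::comm_ring_1) ^ i = Poly_Mapping.single (Poly_Mapping.single v i) 1"
proof (induction i)
  case 0 then show ?case by simp
next
  case (Suc i)
  then show ?case by (simp add: mvar_def mult_single single_add[symmetric])
qed

lemma lookup_mvar_mult:
  "Poly_Mapping.lookup (mvar v * f) m = (if (\<exists>q. m = Poly_Mapping.single v 1 + q) then Poly_Mapping.lookup f (m - Poly_Mapping.single v 1) else 0)"
  unfolding mvar_def by (simp add: lookup_single_mult)

lemma pc_x:
  "pc v i (mvar v * f) = (if i = 0 then 0 else pc v (i - 1) f)"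
proof (rule poly_mapping_eqI)
  fix m
  show "Poly_Mapping.lookup (pc v i (mvar v * f)) m = Poly_Mapping.lookup (if i = 0 then 0 else pc v (i - 1) f) m"
  proof (cases "Poly_Mapping.lookup m v = 0")
    case False then show ?thesis by (simp add: lookup_pc)
  next
    case mv: True
    show ?thesis
    proof (cases "i = 0")
      case True
      have "\<not> (\<exists>q. m = Poly_Mapping.single v 1 + q)"
      proof
        assume "\<exists>q. m = Poly_Mapping.single v 1 + q"
        then obtain q where "m = Poly_Mapping.single v 1 + q" by blast
        then have "Poly_Mapping.lookup m v = 1 + Poly_Mapping.lookup q v" by (simp add: lookup_add)
        with mv show False by simp
      qed
      then show ?thesis using True mv by (simp add: lookup_pc lookup_mvar_mult)
    next
      case False
      have eq: "m + Poly_Mapping.single v i = Poly_Mapping.single v 1 + (m + Poly_Mapping.single v (i - 1))"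
      proof -
        have "Poly_Mapping.single v i = Poly_Mapping.single v 1 + Poly_Mapping.single v (i - 1)"
          using False by (simp add: single_add[symmetric])
        then show ?thesis by (simp add: ac_simps)
      qed
      show ?thesis using False mv
        by (simp add: lookup_pc lookup_mvar_mult eq del: single_add)
    qed
  qed
qed


lemma pc_add: "pc v i (f + g) = pc v i f + pc v i g"
  by (rule poly_mapping_eqI) (simp add: lookup_pc lookup_add)

lemma pc_zero:
  fixes f :: "(nat \<Rightarrow>\<^sub>0 nat) \<Rightarrow>\<^sub>0 'a::comm_ring_1"
  assumes "\<forall>i. pc v i f = 0"
  shows "f = 0"
proof (rule poly_mapping_eqI)
  fix m :: "nat \<Rightarrow>\<^sub>0 nat"
  define i where "i = Poly_Mapping.lookup m v"
  define m' where "m' = m - Poly_Mapping.single v i"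
  have m'v: "Poly_Mapping.lookup m' v = 0" by (simp add: m'_def i_def lookup_minus)
  have "m' + Poly_Mapping.single v i = m"
    by (rule poly_mapping_eqI) (simp add: m'_def i_def lookup_minus lookup_add lookup_single when_def)
  then have "Poly_Mapping.lookup (pc v i f) m' = Poly_Mapping.lookup f m" using m'v by (simp add: lookup_pc)
  then show "Poly_Mapping.lookup f m = Poly_Mapping.lookup 0 m" using assms by simp
qed

lemma pc_fin:
  fixes f :: "(nat \<Rightarrow>\<^sub>0 nat) \<Rightarrow>\<^sub>0 'a::comm_ring_1"
  shows "\<exists>N. \<forall>i\<ge>N. pc v i f = 0"
proof -
  define N where "N = Suc (Max (insert 0 ((\<lambda>m. Poly_Mapping.lookup m v) ` Poly_Mapping.keys f)))"
  have "pc v i f = 0" if "i \<ge> N" for i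
  proof (rule poly_mapping_eqI)
    fix m
    show "Poly_Mapping.lookup (pc v i f) m = Poly_Mapping.lookup 0 m"
    proof (cases "m + Poly_Mapping.single v i \<in> Poly_Mapping.keys f")
      case True
      then have "Poly_Mapping.lookup (m + Poly_Mapping.single v i) v < N"
        unfolding N_def by (simp add: le_imp_less_Suc del: lookup_add)
      moreover have "Poly_Mapping.lookup (m + Poly_Mapping.single v i) v \<ge> i" by (simp add: lookup_add)
      ultimately show ?thesis using that by simp
    next
      case False then show ?thesis by (simp add: lookup_pc in_keys_iff)
    qed
  qed
  then show ?thesis by blast
qed

lemma keys_le_add: "Poly_Mapping.keys (m :: nat \<Rightarrow>\<^sub>0 nat) \<subseteq> Poly_Mapping.keys (m + e)"
  by (simp add: keys_add_nat)

lemma pc_S: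
  assumes p: "p \<in> mpoly_ring (Suc n)"
  shows "pc (Suc n) i p \<in> mpoly_ring n"
  unfolding mpoly_ring_iff
proof
  fix m assume "m \<in> Poly_Mapping.keys (pc (Suc n) i p)"
  then have m1: "Poly_Mapping.lookup m (Suc n) = 0" and m2: "m + Poly_Mapping.single (Suc n) i \<in> Poly_Mapping.keys p"
    by (auto simp: lookup_pc in_keys_iff split: if_splits)
  have "Poly_Mapping.keys m \<subseteq> {1..Suc n}" using p m2 keys_le_add[of m] unfolding mpoly_ring_iff by blast
  moreover have "Suc n \<notin> Poly_Mapping.keys m" using m1 by (simp add: in_keys_iff)
  ultimately show "Poly_Mapping.keys m \<subseteq> {1..n}" by (auto simp: subset_iff) (metis atLeastAtMost_iff le_Suc_eq)
qed


lemma mpoly_key_v: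
  assumes "s \<in> mpoly_ring n" "l \<in> Poly_Mapping.keys s"
  shows "Poly_Mapping.lookup l (Suc n) = 0"
proof -
  have "Poly_Mapping.keys l \<subseteq> {1..n}" using assms unfolding mpoly_ring_iff by blast
  then have "Suc n \<notin> Poly_Mapping.keys l" by auto
  then show ?thesis by (simp add: in_keys_iff)
qed

lemma lookup_mult_expand:
  fixes s f :: "(nat \<Rightarrow>\<^sub>0 nat) \<Rightarrow>\<^sub>0 'a::comm_ring_1"
  shows "Poly_Mapping.lookup (s * f) m = Sum_any (\<lambda>l. Poly_Mapping.lookup s l *
     (if (\<exists>q. m = l + q) then Poly_Mapping.lookup f (m - l) else 0))"
  by (simp add: Poly_Mapping.lookup_mult sum_when_add)

lemma pc_smult:
  fixes s f :: "(nat \<Rightarrow>\<^sub>0 nat) \<Rightarrow>\<^sub>0 'a::comm_ring_1"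
  assumes s: "s \<in> mpoly_ring n"
  shows "pc (Suc n) i (s * f) = s * pc (Suc n) i f"
proof (rule poly_mapping_eqI)
  fix m :: "nat \<Rightarrow>\<^sub>0 nat"
  let ?v = "Suc n" and ?e = "Poly_Mapping.single (Suc n) i"
  show "Poly_Mapping.lookup (pc ?v i (s * f)) m = Poly_Mapping.lookup (s * pc ?v i f) m"
  proof (cases "Poly_Mapping.lookup m ?v = 0")
    case mv: True
    have "Poly_Mapping.lookup s l * (if (\<exists>q. m + ?e = l + q) then Poly_Mapping.lookup f (m + ?e - l) else 0)
        = Poly_Mapping.lookup s l * (if (\<exists>q. m = l + q) then Poly_Mapping.lookup (pc ?v i f) (m - l) else 0)" for l
    proof (cases "l \<in> Poly_Mapping.keys s")
      case False then show ?thesis by (simp add: in_keys_iff)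
    next
      case True
      then have lv: "Poly_Mapping.lookup l ?v = 0" by (rule mpoly_key_v[OF s])
      have iff: "(\<exists>q. m + ?e = l + q) \<longleftrightarrow> (\<exists>q. m = l + q)"
        unfolding ex_add_iff
      proof (intro iffI allI)
        fix k assume h: "\<forall>k. Poly_Mapping.lookup l k \<le> Poly_Mapping.lookup (m + ?e) k"
        show "Poly_Mapping.lookup l k \<le> Poly_Mapping.lookup m k"
        proof (cases "k = ?v")
          case True then show ?thesis using lv by simp
        next
          case False then show ?thesis using h[rule_format, of k] by (simp add: lookup_add lookup_single)
        qed
      next
        fix k assume h: "\<forall>k. Poly_Mapping.lookup l k \<le> Poly_Mapping.lookup m k"
        show "Poly_Mapping.lookup l k \<le> Poly_Mapping.lookup (m + ?e) k"
          using h[rule_format, of k] by (simp add: lookup_add)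
      qed
      show ?thesis
      proof (cases "\<exists>q. m = l + q")
        case False then show ?thesis using iff by simp
      next
        case True
        then have le: "\<forall>k. Poly_Mapping.lookup l k \<le> Poly_Mapping.lookup m k" using ex_add_iff by blast
        have eq: "m + ?e - l = m - l + ?e"
          by (rule poly_mapping_eqI) (use le in \<open>simp add: lookup_add lookup_minus\<close>)
        have "Poly_Mapping.lookup (m - l) ?v = 0" using mv by (simp add: lookup_minus)
        then show ?thesis using True iff eq by (simp add: lookup_pc)
      qed
    qed
    then show ?thesis using mv by (simp add: lookup_pc lookup_mult_expand)
  next
    case mv: False
    have "Poly_Mapping.lookup s l * (if (\<exists>q. m = l + q) then Poly_Mapping.lookup (pc ?v i f) (m - l) else 0) = 0" for l
    proof (cases "l \<in> Poly_Mapping.keys s")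
      case False then show ?thesis by (simp add: in_keys_iff)
    next
      case True
      then have lv: "Poly_Mapping.lookup l ?v = 0" by (rule mpoly_key_v[OF s])
      then have "Poly_Mapping.lookup (m - l) ?v \<noteq> 0" using mv by (simp add: lookup_minus)
      then show ?thesis by (simp add: lookup_pc)
    qed
    then show ?thesis using mv by (simp add: lookup_pc lookup_mult_expand)
  qed
qed


lemma hb_mpoly: "hb (mpoly_ring n) (mpoly_ring (Suc n)) (mvar (Suc n) :: (nat \<Rightarrow>\<^sub>0 nat) \<Rightarrow>\<^sub>0 'a::comm_ring_1) (pc (Suc n))"
proof
  show "subring_of (mpoly_ring n :: ((nat \<Rightarrow>\<^sub>0 nat) \<Rightarrow>\<^sub>0 'a) set)" by (rule mpoly_subring)
  show "subring_of (mpoly_ring (Suc n) :: ((nat \<Rightarrow>\<^sub>0 nat) \<Rightarrow>\<^sub>0 'a) set)" by (rule mpoly_subring)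
  show "mpoly_ring n \<subseteq> mpoly_ring (Suc n)" by (rule mpoly_mono) simp
  show "mvar (Suc n) \<in> mpoly_ring (Suc n)" by (rule mvar_in) auto
  show "\<And>f i. f \<in> mpoly_ring (Suc n) \<Longrightarrow> pc (Suc n) i f \<in> mpoly_ring n" by (rule pc_S)
  show "\<And>f g i. pc (Suc n) i (f + g) = pc (Suc n) i f + pc (Suc n) i g" by (rule pc_add)
  show "\<And>s f i. s \<in> mpoly_ring n \<Longrightarrow> pc (Suc n) i (s * f) = s * pc (Suc n) i f" by (rule pc_smult)
  show "\<And>f i. pc (Suc n) i (mvar (Suc n) * f) = (if i = 0 then 0 else pc (Suc n) (i - 1) f)" by (rule pc_x)
  show "\<And>f. \<forall>i. pc (Suc n) i f = 0 \<Longrightarrow> f = 0" by (rule pc_zero)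
  show "\<And>f. \<exists>N. \<forall>i\<ge>N. pc (Suc n) i f = 0" by (rule pc_fin)
qed

lemma mpoly0: "p \<in> mpoly_ring 0 \<Longrightarrow> p = mconst (Poly_Mapping.lookup p 0)"
  unfolding mconst_def
proof (rule poly_mapping_eqI)
  fix m assume p: "p \<in> mpoly_ring 0"
  show "Poly_Mapping.lookup p m = Poly_Mapping.lookup (Poly_Mapping.single 0 (Poly_Mapping.lookup p 0)) m"
  proof (cases "m = 0")
    case True then show ?thesis by simp
  next
    case False
    have "m \<notin> Poly_Mapping.keys p"
    proof
      assume "m \<in> Poly_Mapping.keys p"
      then have "Poly_Mapping.keys m = {}" using p unfolding mpoly_ring_iff by auto
      then show False using False by simp
    qed
    then show ?thesis using False by (simp add: in_keys_iff lookup_single)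
  qed
qed

lemma mconst_add: "mconst a + mconst b = mconst (a + b)" by (simp add: mconst_def single_add)
lemma mconst_mult: "mconst a * mconst b = mconst (a * b)" by (simp add: mconst_def mult_single)
lemma mconst_uminus: "- mconst a = mconst (- a)" by (simp add: mconst_def single_uminus)
lemma mconst_diff: "mconst a - mconst b = mconst (a - b)" by (simp add: mconst_def single_diff)
lemma mconst_0: "mconst 0 = 0" by (simp add: mconst_def)
lemma mconst_1: "mconst 1 = 1" by (simp add: mconst_def)
lemma mconst_sum: "mconst (sum f A) = (\<Sum>x\<in>A. mconst (f x))"
  by (induction A rule: infinite_finite_induct) (simp_all add: mconst_0 mconst_add[symmetric])

lemma noeth_mpoly0:
  assumes N: "noetherian_on (UNIV :: 'a::comm_ring_1 set)"
  shows "noetherian_on (mpoly_ring 0 :: ((nat \<Rightarrow>\<^sub>0 nat) \<Rightarrow>\<^sub>0 'a) set)"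
  unfolding noetherian_on_def
proof (intro allI impI)
  fix I :: "((nat \<Rightarrow>\<^sub>0 nat) \<Rightarrow>\<^sub>0 'a) set" assume I: "ideal_of (mpoly_ring 0) I"
  have Sub: "subring_of (mpoly_ring 0 :: ((nat \<Rightarrow>\<^sub>0 nat) \<Rightarrow>\<^sub>0 'a) set)" by (rule mpoly_subring)
  define J where "J = {c. mconst c \<in> I}"
  have J: "ideal_of UNIV J"
  proof (rule idealI)
    show "J \<subseteq> UNIV" by simp
    show "0 \<in> J" using idealD(2)[OF I] by (simp add: J_def mconst_0)
    show "a + b \<in> J" if "a \<in> J" "b \<in> J" for a b
      using idealD(3)[OF I, of "mconst a" "mconst b"] that by (simp add: J_def mconst_add)
    show "- a \<in> J" if "a \<in> J" for a
      using idealD(4)[OF I, of "mconst a"] that by (simp add: J_def mconst_uminus)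
    show "s * a \<in> J" if "s \<in> UNIV" "a \<in> J" for s a
      using idealD(5)[OF I mconst_in[of s 0], of "mconst a"] that by (simp add: J_def mconst_mult)
  qed
  obtain F where F: "finite F" "F \<subseteq> J" "J = ideal_gen UNIV F"
    using N[unfolded noetherian_on_def, rule_format, OF J] by (elim exE conjE) blast
  define W where "W = mconst ` F"
  have WI: "W \<subseteq> I" using F(2) by (auto simp: W_def J_def)
  have WS: "W \<subseteq> mpoly_ring 0" using WI idealD(1)[OF I] by blast
  have GW: "ideal_of (mpoly_ring 0) (ideal_gen (mpoly_ring 0) W)" by (rule ideal_gen_ideal[OF Sub WS])
  have "I \<subseteq> ideal_gen (mpoly_ring 0) W"
  proof
    fix p assume pI: "p \<in> I"
    then have p0: "p \<in> mpoly_ring 0" using idealD(1)[OF I] by blast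
    define c where "c = Poly_Mapping.lookup p 0"
    have pc: "p = mconst c" unfolding c_def by (rule mpoly0[OF p0])
    then have "c \<in> J" using pI by (simp add: J_def)
    then have "c \<in> ideal_gen UNIV F" using F(3) by simp
    then obtain a where a: "c = (\<Sum>f\<in>F. a f * f)"
      using ideal_gen_finite[OF subring_UNIV F(1)] by blast
    have "p = (\<Sum>f\<in>F. mconst (a f) * mconst f)" using pc a by (simp add: mconst_sum mconst_mult)
    moreover have "(\<Sum>f\<in>F. mconst (a f) * mconst f) \<in> ideal_gen (mpoly_ring 0) W"
    proof (rule ideal_sum[OF GW])
      fix f assume "f \<in> F"
      then have "mconst f \<in> ideal_gen (mpoly_ring 0) W" using ideal_gen_sup[of W] by (auto simp: W_def)
      then show "mconst (a f) * mconst f \<in> ideal_gen (mpoly_ring 0) W" by (rule idealD(5)[OF GW mconst_in])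
    qed
    ultimately show "p \<in> ideal_gen (mpoly_ring 0) W" by simp
  qed
  moreover have "ideal_gen (mpoly_ring 0) W \<subseteq> I" by (rule ideal_gen_least[OF I WI])
  ultimately show "\<exists>F. finite F \<and> F \<subseteq> I \<and> I = ideal_gen (mpoly_ring 0) F"
    using F(1) WI by (intro exI[of _ W]) (auto simp: W_def)
qed

lemma noeth_mpoly:
  assumes N: "noetherian_on (UNIV :: 'a::comm_ring_1 set)"
  shows "noetherian_on (mpoly_ring n :: ((nat \<Rightarrow>\<^sub>0 nat) \<Rightarrow>\<^sub>0 'a) set)"
proof (induction n)
  case 0 then show ?case by (rule noeth_mpoly0[OF N])
next
  case (Suc n)
  interpret hb "mpoly_ring n" "mpoly_ring (Suc n)" "mvar (Suc n) :: (nat \<Rightarrow>\<^sub>0 nat) \<Rightarrow>\<^sub>0 'a" "pc (Suc n)"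
    by (rule hb_mpoly)
  show ?case by (rule hilbert[OF Suc.IH])
qed


lemma contract_prime:
  fixes P :: "((nat \<Rightarrow>\<^sub>0 nat) \<Rightarrow>\<^sub>0 'a::comm_ring_1) set"
  assumes P: "prime_ideal_of (mpoly_ring n) P"
  shows "prime_ideal_of (UNIV :: 'a set) {a. mconst a \<in> P}"
  unfolding prime_ideal_of_def
proof (intro conjI ballI impI)
  have PI: "ideal_of (mpoly_ring n) P" using P by (rule prime_ideal_ideal)
  show "ideal_of UNIV {a. mconst a \<in> P}"
  proof (rule idealI)
    show "{a. mconst a \<in> P} \<subseteq> UNIV" by simp
    show "0 \<in> {a. mconst a \<in> P}" using idealD(2)[OF PI] by (simp add: mconst_0)
    show "a + b \<in> {a. mconst a \<in> P}" if "a \<in> {a. mconst a \<in> P}" "b \<in> {a. mconst a \<in> P}" for a b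
      using idealD(3)[OF PI, of "mconst a" "mconst b"] that by (simp add: mconst_add)
    show "- a \<in> {a. mconst a \<in> P}" if "a \<in> {a. mconst a \<in> P}" for a
      using idealD(4)[OF PI, of "mconst a"] that by (simp add: mconst_uminus)
    show "s * a \<in> {a. mconst a \<in> P}" if "s \<in> UNIV" "a \<in> {a. mconst a \<in> P}" for s a
      using idealD(5)[OF PI mconst_in[of s n], of "mconst a"] that by (simp add: mconst_mult)
  qed
  have "1 \<notin> P" using prime_one_notin[OF mpoly_subring P] .
  then have "(1::'a) \<notin> {a. mconst a \<in> P}" by (simp add: mconst_1)
  then show "{a. mconst a \<in> P} \<noteq> UNIV" by blast
  fix a b :: 'a assume "a * b \<in> {a. mconst a \<in> P}"
  then have "mconst a * mconst b \<in> P" by (simp add: mconst_mult)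
  then show "a \<in> {a. mconst a \<in> P} \<or> b \<in> {a. mconst a \<in> P}"
    using prime_ideal_mult[OF P mconst_in mconst_in] by simp
qed

definition gens :: "((nat \<Rightarrow>\<^sub>0 nat) \<Rightarrow>\<^sub>0 'a::comm_ring_1) set \<Rightarrow> (nat \<Rightarrow> 'a) \<Rightarrow> nat \<Rightarrow> ((nat \<Rightarrow>\<^sub>0 nat) \<Rightarrow>\<^sub>0 'a) set" where
  "gens J r l = J \<union> {mvar i - mconst (r i) | i. i \<in> {1..l}}"

lemma gens_sub:
  assumes J: "ideal_of (mpoly_ring n) J" and l: "l \<le> n"
  shows "gens J r l \<subseteq> mpoly_ring n"
proof
  fix g assume "g \<in> gens J r l"
  then consider "g \<in> J" | i where "g = mvar i - mconst (r i)" "1 \<le> i" "i \<le> l" unfolding gens_def by auto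
  then show "g \<in> mpoly_ring n"
  proof cases
    case 1 then show ?thesis using idealD(1)[OF J] by blast
  next
    case 2 then show ?thesis using subringD(6)[OF mpoly_subring mvar_in[of i n] mconst_in] l by auto
  qed
qed

lemma main_induct:
  fixes J :: "((nat \<Rightarrow>\<^sub>0 nat) \<Rightarrow>\<^sub>0 'a::comm_ring_1) set"
  assumes noeth: "noetherian_on (UNIV :: 'a set)"
    and res_inf: "\<And>M. maximal_ideal_of (UNIV :: 'a set) M \<Longrightarrow> infinite (residue_cosets M)"
    and J: "ideal_of (mpoly_ring n) J"
    and htJ: "ideal_height (mpoly_ring n) J \<ge> enat (d + 1)"
  shows "l \<le> n \<Longrightarrow> \<exists>r :: nat \<Rightarrow> 'a. \<forall>Q. prime_ideal_of (mpoly_ring n) Q \<and> ideal_gen (mpoly_ring n) (gens J r l) \<subseteq> Q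
            \<longrightarrow> enat (d + l + 1) \<le> height_prime (mpoly_ring n) Q"
proof (induction l)
  case 0
  show ?case
  proof (intro exI allI impI)
    fix Q assume Q: "prime_ideal_of (mpoly_ring n) Q \<and> ideal_gen (mpoly_ring n) (gens J (\<lambda>_. 0) 0) \<subseteq> Q"
    have "J \<subseteq> gens J (\<lambda>_. 0) 0" by (simp add: gens_def)
    then have "J \<subseteq> Q" using subset_trans[OF ideal_gen_sup Q[THEN conjunct2]] by (rule subset_trans)
    then show "enat (d + 0 + 1) \<le> height_prime (mpoly_ring n) Q" using ideal_height_le[OF htJ] Q by simp
  qed
next
  case (Suc l)
  let ?T = "mpoly_ring n :: ((nat \<Rightarrow>\<^sub>0 nat) \<Rightarrow>\<^sub>0 'a) set"
  have Sub: "subring_of ?T" by (rule mpoly_subring)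
  obtain r where r: "\<And>Q. prime_ideal_of ?T Q \<Longrightarrow> ideal_gen ?T (gens J r l) \<subseteq> Q
            \<Longrightarrow> enat (d + l + 1) \<le> height_prime ?T Q"
    using Suc.IH Suc.prems by auto
  define K where "K = ideal_gen ?T (gens J r l)"
  have Kid: "ideal_of ?T K" unfolding K_def using ideal_gen_ideal[OF Sub gens_sub[OF J]] Suc.prems by simp
  obtain PP where PPx: "finite PP \<and> (\<forall>P\<in>PP. prime_ideal_of ?T P \<and> K \<subseteq> P) \<and>
            (\<forall>Q. prime_ideal_of ?T Q \<and> K \<subseteq> Q \<longrightarrow> (\<exists>P\<in>PP. P \<subseteq> Q))"
    using noeth_finite_primes[OF Sub noeth_mpoly[OF noeth] Kid] by (rule exE)
  have PP: "finite PP" "\<And>P. P \<in> PP \<Longrightarrow> prime_ideal_of ?T P \<and> K \<subseteq> P"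
    "\<And>Q. prime_ideal_of ?T Q \<Longrightarrow> K \<subseteq> Q \<Longrightarrow> \<exists>P\<in>PP. P \<subseteq> Q"
    using PPx by auto
  define x where "x = (mvar (Suc l) :: (nat \<Rightarrow>\<^sub>0 nat) \<Rightarrow>\<^sub>0 'a)"
  define B where "B = {P \<in> PP. \<not> enat (d + Suc l + 1) \<le> height_prime ?T P}"
  define pp where "pp P = {a. mconst a \<in> P}" for P :: "((nat \<Rightarrow>\<^sub>0 nat) \<Rightarrow>\<^sub>0 'a) set"
  define C where "C = (\<lambda>P. (SOME c. x - mconst c \<in> P, pp P)) ` {P \<in> B. \<exists>c. x - mconst c \<in> P}"
  have fB: "finite B" using PP(1) by (simp add: B_def)
  have ppB: "\<forall>H\<in>pp ` B. ideal_of UNIV H \<and> infinite (residue_cosets H)"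
  proof
    fix H assume "H \<in> pp ` B"
    then obtain P where P: "P \<in> B" "H = pp P" by blast
    have "prime_ideal_of ?T P" using P(1) PP(2) by (auto simp: B_def)
    then have "prime_ideal_of UNIV H" using contract_prime P(2) by (simp add: pp_def)
    then show "ideal_of UNIV H \<and> infinite (residue_cosets H)"
      using prime_ideal_ideal residue_infinite_prime res_inf by blast
  qed
  have "finite C" using fB by (simp add: C_def)
  moreover have "\<forall>p\<in>C. snd p \<in> pp ` B" by (auto simp: C_def)
  ultimately obtain y where y: "\<forall>p\<in>C. y \<notin> cs (snd p) (fst p)"
    using neumann[OF finite_imageI[OF fB] ppB] by blast
  have yB: "x - mconst y \<notin> P" if P: "P \<in> B" for P
  proof
    assume xy: "x - mconst y \<in> P"
    have PT: "prime_ideal_of ?T P" using P PP(2) by (auto simp: B_def)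
    have PI: "ideal_of ?T P" using prime_ideal_ideal[OF PT] .
    define c where "c = (SOME c. x - mconst c \<in> P)"
    have cP: "x - mconst c \<in> P" unfolding c_def using someI[of "\<lambda>c. x - mconst c \<in> P" y] xy by blast
    have "(c, pp P) \<in> C" unfolding C_def c_def using P xy by blast
    then have "y \<notin> cs (pp P) c" using y by auto
    moreover have "(x - mconst y) - (x - mconst c) \<in> P" by (rule idealD(7)[OF PI xy cP])
    then have "mconst (c - y) \<in> P" by (simp add: mconst_diff[symmetric])
    then have "y \<in> cs (pp P) c" by (simp add: cs_def pp_def)
    ultimately show False by simp
  qed
  define r' where "r' = r(Suc l := y)"
  show ?case
  proof (intro exI[of _ r'] allI impI)
    fix Q assume Q: "prime_ideal_of ?T Q \<and> ideal_gen ?T (gens J r' (Suc l)) \<subseteq> Q"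
    have QP: "prime_ideal_of ?T Q" using Q by (rule conjunct1)
    have QI: "ideal_of ?T Q" using prime_ideal_ideal[OF QP] .
    have gQ: "gens J r' (Suc l) \<subseteq> Q" using subset_trans[OF ideal_gen_sup Q[THEN conjunct2]] .
    have "gens J r l \<subseteq> gens J r' (Suc l)"
    proof
      fix g assume "g \<in> gens J r l"
      then consider "g \<in> J" | i where "g = mvar i - mconst (r i)" "1 \<le> i" "i \<le> l" unfolding gens_def by auto
      then show "g \<in> gens J r' (Suc l)"
      proof cases
        case 1 then show ?thesis by (simp add: gens_def)
      next
        case 2
        then have "g = mvar i - mconst (r' i)" by (simp add: r'_def)
        then show ?thesis unfolding gens_def using 2 by (intro UnI2 CollectI exI[of _ i]) simp
      qed
    qed
    then have "gens J r l \<subseteq> Q" using gQ by (rule subset_trans)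
    then have "K \<subseteq> Q" unfolding K_def by (rule ideal_gen_least[OF QI])
    have xQ: "x - mconst y \<in> Q"
    proof -
      have "x - mconst y = mvar (Suc l) - mconst (r' (Suc l))" by (simp add: r'_def x_def)
      then have "x - mconst y \<in> gens J r' (Suc l)" unfolding gens_def by (intro UnI2 CollectI exI[of _ "Suc l"]) simp
      then show ?thesis using gQ by blast
    qed
    have "\<exists>P\<in>PP. P \<subseteq> Q" by (rule PP(3)[OF QP \<open>K \<subseteq> Q\<close>])
    then obtain P where P: "P \<in> PP" "P \<subseteq> Q" by (rule bexE)
    have PT: "prime_ideal_of ?T P" "K \<subseteq> P" using PP(2)[OF P(1)] by auto
    show "enat (d + Suc l + 1) \<le> height_prime ?T Q"
    proof (cases "enat (d + Suc l + 1) \<le> height_prime ?T P")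
      case True then show ?thesis by (rule height_mono[OF PT(1) QP P(2)])
    next
      case False
      then have "P \<in> B" using P(1) by (simp add: B_def)
      then have "x - mconst y \<notin> P" by (rule yB)
      then have "P \<noteq> Q" using xQ by auto
      then have PQ: "P \<subset> Q" using P(2) by (rule psubsetI[rotated])
      have "enat (d + l + 1) \<le> height_prime ?T P" using r[OF PT(1)] PT(2) unfolding K_def by simp
      then have "enat (Suc (d + l + 1)) \<le> height_prime ?T Q" by (rule height_step[OF PT(1) QP PQ])
      then show ?thesis by simp
    qed
  qed
qed


theorem lemma2p4:
  fixes d n l :: nat
    and J :: "((nat \<Rightarrow>\<^sub>0 nat) \<Rightarrow>\<^sub>0 'a::comm_ring_1) set"
  assumes noeth: "noetherian_on (UNIV :: 'a set)"
    and dim: "krull_dim (UNIV :: 'a set) = enat d"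
    and res_inf: "\<And>M. maximal_ideal_of (UNIV :: 'a set) M \<Longrightarrow> infinite (residue_cosets M)"
    and J: "ideal_of (mpoly_ring n) J"
    and htJ: "ideal_height (mpoly_ring n) J \<ge> enat (d + 1)"
    and l: "l \<le> n"
  shows "\<exists>r :: nat \<Rightarrow> 'a.
           (let K = ideal_gen (mpoly_ring n) (J \<union> {mvar i - mconst (r i) | i. i \<in> {1..l}})
            in K = mpoly_ring n \<or> ideal_height (mpoly_ring n) K \<ge> enat (d + l + 1))"
  proof -
  have "\<exists>r :: nat \<Rightarrow> 'a. \<forall>Q. prime_ideal_of (mpoly_ring n) Q \<and> ideal_gen (mpoly_ring n) (gens J r l) \<subseteq> Q
            \<longrightarrow> enat (d + l + 1) \<le> height_prime (mpoly_ring n) Q"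
    by (rule main_induct[OF noeth res_inf J htJ l])
  then obtain r :: "nat \<Rightarrow> 'a" where r: "\<And>Q. prime_ideal_of (mpoly_ring n) Q \<Longrightarrow> ideal_gen (mpoly_ring n) (gens J r l) \<subseteq> Q
            \<Longrightarrow> enat (d + l + 1) \<le> height_prime (mpoly_ring n) Q"
    by blast
  have "enat (d + l + 1) \<le> ideal_height (mpoly_ring n) (ideal_gen (mpoly_ring n) (gens J r l))"
    by (rule ideal_height_ge) (rule r)
  then show ?thesis unfolding gens_def Let_def by (intro exI[of _ r] disjI2)
qed

end
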